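(* In the setting below, with $\gamma=(1+\sqrt2)^2$, there exist constants $C_1,C_2>0$ such that for all $N\in\mathbb{N}_0$ and all $M\ge C_1N^2\gamma^N$, the matrix $\hat H_N^{(M)}$ is invertible and $\|(H_N^{(M)})^\dagger\|_{\ell^2}\le C_2\gamma^N$.
   Context: For $M,N\in\mathbb{N}$ and $0\le\delta\le2/M$ let $x_m=-1+\delta+2m/M$, $m=0,\dots,M-1$, and let $\hat H_N^{(M)}$ be the $N\times N$ matrix $(\hat H_N^{(M)})_{k\ell}=\frac1M\sum_{m=0}^{M-1}x_m^kx_m^\ell$, $k,\ell\in\{0,\dots,N-1\}$. $H_N^{(M)}$ is its lift to $\ell^2(\mathbb{N}_0)$ (acting as $\hat H_N^{(M)}$ on the first $N$ coordinates and as $0$ on the orthogonal complement), and, when $\hat H_N^{(M)}$ is invertible, $(H_N^{(M)})^\dagger$ is the lift of $(\hat H_N^{(M)})^{-1}$ in the same way. $\|\cdot\|_{\ell^2}$ is the operator norm on $\ell^2(\mathbb{N}_0)$. *)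

theory Defs
  imports Complex_Main "Jordan_Normal_Form.Matrix"
begin

definition node :: "nat \<Rightarrow> real \<Rightarrow> nat \<Rightarrow> real" where
  "node M \<delta> m = -1 + \<delta> + 2 * real m / real M"

definition hatH :: "nat \<Rightarrow> real \<Rightarrow> nat \<Rightarrow> real mat" where
  "hatH M \<delta> N = mat N N (\<lambda>(k, l). (1 / real M) * (\<Sum>m<M. node M \<delta> m ^ k * node M \<delta> m ^ l))"

text \<open>Inverse of a square matrix (meaningful when it is invertible).\<close>
definition inv_mat :: "real mat \<Rightarrow> real mat" where
  "inv_mat A = (THE B. B \<in> carrier_mat (dim_row A) (dim_row A) \<and> inverts_mat A B \<and> inverts_mat B A)"

text \<open>Lift of a finite matrix to an operator on sequences nat => real (l^2(N_0)):
  acts as the matrix on the first coordinates and as 0 on the orthogonal complement.\<close>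
definition lift_op :: "real mat \<Rightarrow> (nat \<Rightarrow> real) \<Rightarrow> (nat \<Rightarrow> real)" where
  "lift_op A v = (\<lambda>i. if i < dim_row A then (\<Sum>j<dim_col A. A $$ (i, j) * v j) else 0)"

definition ell2_norm :: "(nat \<Rightarrow> real) \<Rightarrow> real" where
  "ell2_norm v = sqrt (\<Sum>i. (v i)\<^sup>2)"

definition ell2_opnorm :: "((nat \<Rightarrow> real) \<Rightarrow> (nat \<Rightarrow> real)) \<Rightarrow> real" where
  "ell2_opnorm T = Sup {ell2_norm (T v) | v. summable (\<lambda>i. (v i)\<^sup>2) \<and> ell2_norm v \<le> 1}"

end

theory Submission
  imports Defs "HOL-Computational_Algebra.Polynomial" "Jordan_Normal_Form.Determinant"
begin


lemma wcs:
  fixes w a b :: "'i \<Rightarrow> real"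
  assumes "finite A" "\<And>i. i \<in> A \<Longrightarrow> 0 \<le> w i"
  shows "(\<Sum>i\<in>A. w i * a i * b i)\<^sup>2 \<le> (\<Sum>i\<in>A. w i * (a i)\<^sup>2) * (\<Sum>i\<in>A. w i * (b i)\<^sup>2)"
proof -
  have "0 \<le> (\<Sum>s\<in>A. \<Sum>t\<in>A. w s * w t * (a s * b t - a t * b s)\<^sup>2)"
    using assms(2) by (intro sum_nonneg mult_nonneg_nonneg) auto
  also have "\<dots> = (\<Sum>s\<in>A. \<Sum>t\<in>A. (w s * (a s)\<^sup>2) * (w t * (b t)\<^sup>2) + (w t * (a t)\<^sup>2) * (w s * (b s)\<^sup>2)
       - 2 * ((w s * a s * b s) * (w t * a t * b t)))"
    by (intro sum.cong refl) (simp add: power2_eq_square algebra_simps)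
  also have "\<dots> = (\<Sum>s\<in>A. \<Sum>t\<in>A. (w s * (a s)\<^sup>2) * (w t * (b t)\<^sup>2)) + (\<Sum>s\<in>A. \<Sum>t\<in>A. (w s * (b s)\<^sup>2) * (w t * (a t)\<^sup>2))
       - 2 * (\<Sum>s\<in>A. \<Sum>t\<in>A. (w s * a s * b s) * (w t * a t * b t))"
    by (simp add: sum_subtractf sum.distrib sum_distrib_left mult.commute)
  also have "\<dots> = 2 * ((\<Sum>i\<in>A. w i * (a i)\<^sup>2) * (\<Sum>i\<in>A. w i * (b i)\<^sup>2)) - 2 * (\<Sum>i\<in>A. w i * a i * b i)\<^sup>2"
    by (simp add: sum_product[symmetric] power2_eq_square)
  finally show ?thesis by simp
qed


definition gm :: "nat \<Rightarrow> real" where "gm j = (if even j then 1 / real (Suc j) else 0)"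

definition Lf :: "real poly \<Rightarrow> real" where "Lf p = (\<Sum>j\<le>degree p. coeff p j * gm j)"

lemma Lf_bound: "degree p \<le> n \<Longrightarrow> Lf p = (\<Sum>j\<le>n. coeff p j * gm j)"
  unfolding Lf_def
  by (rule sum.mono_neutral_left) (auto simp: coeff_eq_0)

lemma Lf_add: "Lf (p + q) = Lf p + Lf q"
proof -
  define n where "n = max (degree p) (degree q)"
  have "degree (p + q) \<le> n" unfolding n_def by (rule degree_add_le_max)
  then show ?thesis using Lf_bound[of p n] Lf_bound[of q n] Lf_bound[of "p+q" n]
    by (simp add: n_def algebra_simps sum.distrib)
qed

lemma Lf_smult: "Lf (smult a p) = a * Lf p"
  using Lf_bound[of "smult a p" "degree p"] Lf_bound[of p "degree p"]
  by (simp add: sum_distrib_left algebra_simps)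

lemma Lf_minus: "Lf (- p) = - Lf p"
  using Lf_smult[of "-1" p] by simp

lemma Lf_diff: "Lf (p - q) = Lf p - Lf q"
  using Lf_add[of p "-q"] Lf_minus[of q] by simp

lemma Lf_0[simp]: "Lf 0 = 0" by (simp add: Lf_def)

lemma Lf_sum: "Lf (\<Sum>i\<in>A. f i) = (\<Sum>i\<in>A. Lf (f i))"
  by (induction A rule: infinite_finite_induct) (auto simp: Lf_add)

lemma Lf_monom: "Lf (monom a j) = a * gm j"
proof -
  have "Lf (monom a j) = (\<Sum>i\<le>j. coeff (monom a j) i * gm i)"
    by (rule Lf_bound) (simp add: degree_monom_le)
  also have "\<dots> = (\<Sum>i\<le>j. if i = j then a * gm j else 0)"
    by (intro sum.cong) (auto simp: coeff_monom)
  finally show ?thesis by simp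
qed

lemma Lf_pderiv: "Lf (pderiv f) = (poly f 1 - poly f (-1)) / 2"
proof -
  define n where "n = degree f"
  have d: "degree (pderiv f) \<le> n" unfolding n_def by (simp add: degree_pderiv)
  have "Lf (pderiv f) = (\<Sum>j\<le>n. coeff f (Suc j) * (if even j then 1 else 0))"
    using Lf_bound[OF d] by (intro trans[OF Lf_bound[OF d]] sum.cong) (auto simp: coeff_pderiv gm_def)
  also have "\<dots> = (\<Sum>j\<le>Suc n. coeff f j * (if odd j then 1 else 0))"
    by (subst sum.atMost_Suc_shift) simp
  also have "\<dots> = (\<Sum>j\<le>n. coeff f j * (if odd j then 1 else 0))"
    by (simp add: n_def coeff_eq_0)
  also have "\<dots> = (\<Sum>j\<le>n. (coeff f j * 1 ^ j - coeff f j * (-1) ^ j) / 2)"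
    by (intro sum.cong) auto
  also have "\<dots> = (poly f 1 - poly f (-1)) / 2"
    by (simp add: poly_altdef n_def sum_divide_distrib[symmetric] sum_subtractf del: power_one)
  finally show ?thesis .
qed

lemma Lf_parts:
  "Lf (q * pderiv v) = (poly q 1 * poly v 1 - poly q (-1) * poly v (-1)) / 2 - Lf (pderiv q * v)"
  using Lf_pderiv[of "q * v"] by (simp add: pderiv_mult Lf_add algebra_simps)

lemma Lf_parts_iter:
  assumes "\<And>i. i < k \<Longrightarrow> poly ((pderiv ^^ i) v) 1 = 0 \<and> poly ((pderiv ^^ i) v) (-1) = 0"
  shows "Lf (q * (pderiv ^^ k) v) = (-1) ^ k * Lf ((pderiv ^^ k) q * v)"
  using assms
proof (induction k arbitrary: q)
  case 0 then show ?case by simp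
next
  case (Suc k)
  have "Lf (q * (pderiv ^^ Suc k) v) = Lf (q * pderiv ((pderiv ^^ k) v))" by simp
  also have "\<dots> = - Lf (pderiv q * (pderiv ^^ k) v)"
    using Suc.prems[of k] by (simp add: Lf_parts)
  also have "\<dots> = - ((-1) ^ k * Lf ((pderiv ^^ k) (pderiv q) * v))"
    using Suc.IH[of "pderiv q"] Suc.prems by simp
  also have "(pderiv ^^ k) (pderiv q) = (pderiv ^^ Suc k) q"
    by (simp add: funpow_swap1)
  finally show ?case by simp
qed


definition uu :: "nat \<Rightarrow> real poly" where "uu n = [:-1,0,1:] ^ n"
definition QQ :: "nat \<Rightarrow> real poly" where "QQ n = (pderiv ^^ n) (uu n)"

lemma uu_deriv_factor: "i \<le> n \<Longrightarrow> \<exists>r. (pderiv ^^ i) (uu n) = [:-1,0,1:] ^ (n - i) * r"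
proof (induction i)
  case 0 then show ?case by (auto simp: uu_def)
next
  case (Suc i)
  then obtain r where r: "(pderiv ^^ i) (uu n) = [:-1,0,1:] ^ (n - i) * r" by auto
  define m where "m = n - Suc i"
  have nm: "n - i = Suc m" using Suc.prems unfolding m_def by simp
  have "(pderiv ^^ Suc i) (uu n) = pderiv ([:-1,0,1:] ^ Suc m * r)" using r nm by simp
  also have "\<dots> = [:-1,0,1:] ^ m * ([:-1,0,1:] * pderiv r + smult (of_nat (Suc m)) r * pderiv [:-1,0,1:])"
    by (simp only: pderiv_mult pderiv_power_Suc) (simp add: algebra_simps)
  finally show ?case unfolding m_def by blast
qed

lemma uu_deriv_vanish:
  assumes "i < n"
  shows "poly ((pderiv ^^ i) (uu n)) 1 = 0 \<and> poly ((pderiv ^^ i) (uu n)) (-1) = 0"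
proof -
  obtain r where r: "(pderiv ^^ i) (uu n) = [:-1,0,1:] ^ (n - i) * r"
    using uu_deriv_factor[of i n] assms by auto
  have "n - i \<noteq> 0" using assms by simp
  then show ?thesis unfolding r by (simp add: zero_power)
qed

lemma degree_uu: "degree (uu n) = 2 * n"
  unfolding uu_def by (simp add: degree_power_eq)

lemma coeff_uu_top: "coeff (uu n) (2 * n) = 1"
proof -
  have "coeff (uu n) (2*n) = lead_coeff (uu n)" by (simp add: degree_uu)
  also have "\<dots> = 1" unfolding uu_def by (simp add: lead_coeff_power)
  finally show ?thesis .
qed

lemma coeff_QQ: "coeff (QQ n) k = pochhammer (of_nat (Suc k)) n * coeff (uu n) (k + n)"
  unfolding QQ_def by (simp add: coeff_higher_pderiv)

lemma degree_QQ: "degree (QQ n) = n"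
proof -
  have "degree (QQ n) = 2 * n - n" unfolding QQ_def by (simp add: degree_higher_pderiv degree_uu)
  then show ?thesis by simp
qed

lemma higher_pderiv_small: "degree p < n \<Longrightarrow> (pderiv ^^ n) p = 0"
  by (intro poly_eqI) (simp add: coeff_higher_pderiv coeff_eq_0)

lemma pochhammer_Suc_fact: "pochhammer (real (Suc m)) n * fact m = fact (m + n)"
proof (induction n)
  case 0 then show ?case by simp
next
  case (Suc n)
  have "pochhammer (real (Suc m)) (Suc n) * fact m = (real (Suc m) + real n) * (pochhammer (real (Suc m)) n * fact m)"
    by (simp add: pochhammer_rec' algebra_simps)
  also have "\<dots> = real (Suc (m + n)) * fact (m + n)" using Suc.IH by simp
  also have "\<dots> = fact (m + Suc n)" by simp
  finally show ?case .
qed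

lemma lead_QQ: "coeff (QQ n) n = fact (2 * n) / fact n"
proof -
  have c: "coeff (uu n) (n + n) = 1" using coeff_uu_top[of n] by (simp add: mult_2)
  have p: "pochhammer (real (Suc n)) n * fact n = fact (n + n)" by (rule pochhammer_Suc_fact)
  have "coeff (QQ n) n = pochhammer (real (Suc n)) n" by (simp add: coeff_QQ c)
  also have "\<dots> = fact (n + n) / fact n" using p by (simp add: field_simps)
  finally show ?thesis by (simp add: mult_2)
qed

lemma higher_pderiv_QQ_self: "(pderiv ^^ n) (QQ n) = [:fact (2 * n):]"
proof (intro poly_eqI)
  fix k
  show "coeff ((pderiv ^^ n) (QQ n)) k = coeff [:fact (2 * n):] k"
  proof (cases k)
    case 0
    have "pochhammer (1::real) n = fact n" by (simp add: pochhammer_fact)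
    then show ?thesis using 0 by (simp add: coeff_higher_pderiv lead_QQ)
  next
    case (Suc j)
    then show ?thesis by (simp add: coeff_higher_pderiv coeff_eq_0 degree_QQ)
  qed
qed

lemma QQ_orth_lt: "m < n \<Longrightarrow> Lf (QQ m * QQ n) = 0"
proof -
  assume mn: "m < n"
  have "Lf (QQ m * QQ n) = (-1) ^ n * Lf ((pderiv ^^ n) (QQ m) * uu n)"
    unfolding QQ_def[of n] by (rule Lf_parts_iter) (rule uu_deriv_vanish)
  also have "(pderiv ^^ n) (QQ m) = 0" using mn by (intro higher_pderiv_small) (simp add: degree_QQ)
  finally show ?thesis by simp
qed

lemma QQ_orth: "m \<noteq> n \<Longrightarrow> Lf (QQ m * QQ n) = 0"
  by (metis QQ_orth_lt mult.commute linorder_neqE_nat)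

lemma QQ_norm_aux: "Lf (QQ n * QQ n) = (-1) ^ n * fact (2 * n) * Lf (uu n)"
proof -
  have "Lf (QQ n * QQ n) = (-1) ^ n * Lf ((pderiv ^^ n) (QQ n) * uu n)"
    unfolding QQ_def[of n] by (rule Lf_parts_iter) (rule uu_deriv_vanish)
  also have "(pderiv ^^ n) (QQ n) * uu n = smult (fact (2 * n)) (uu n)"
    by (simp add: higher_pderiv_QQ_self)
  finally show ?thesis by (simp add: Lf_smult)
qed

lemma Lf_uu_rec: "(2 * real k + 3) * Lf (uu (Suc k)) = - 2 * (real k + 1) * Lf (uu k)"
proof -
  have b1: "poly (uu (Suc k)) 1 = 0" "poly (uu (Suc k)) (-1) = 0" by (simp_all add: uu_def)
  have "Lf ([:0,1:] * pderiv (uu (Suc k))) = (poly [:0,1:] 1 * poly (uu (Suc k)) 1 - poly [:0,1:] (-1) * poly (uu (Suc k)) (-1)) / 2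
      - Lf (pderiv [:0,1:] * uu (Suc k))" by (rule Lf_parts)
  also have "pderiv [:0,1::real:] = 1" by (simp add: pderiv_pCons)
  finally have "Lf ([:0,1:] * pderiv (uu (Suc k))) = - Lf (uu (Suc k))"
    using b1 by simp
  moreover have "[:0,1:] * pderiv (uu (Suc k)) = smult (2 * (real k + 1)) (uu (Suc k) + uu k)"
  proof -
    have d: "pderiv [:-1,0,1:] = [:0,2::real:]" by (simp add: pderiv_pCons)
    have e: "[:0,1:] * [:0,2::real:] = smult 2 ([:-1,0,1:] + 1)" by (simp add: one_pCons)
    have "[:0,1:] * pderiv (uu (Suc k)) = smult (of_nat (Suc k)) ([:-1,0,1:] ^ k) * ([:0,1:] * [:0,2:])"
      unfolding uu_def pderiv_power_Suc d by (simp add: algebra_simps)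
    also have "\<dots> = smult (2 * (real k + 1)) (uu (Suc k) + uu k)"
      unfolding e uu_def by (simp add: algebra_simps)
    finally show ?thesis .
  qed
  ultimately have "- Lf (uu (Suc k)) = 2 * (real k + 1) * (Lf (uu (Suc k)) + Lf (uu k))"
    by (simp add: Lf_smult Lf_add)
  then show ?thesis by (simp add: algebra_simps)
qed

lemma Lf_uu: "Lf (uu n) = (-1) ^ n * 4 ^ n * (fact n)\<^sup>2 / fact (2 * n + 1)"
proof (induction n)
  case 0
  then show ?case by (simp add: uu_def Lf_def gm_def)
next
  case (Suc k)
  have r: "(2 * real k + 3) * Lf (uu (Suc k)) = - 2 * (real k + 1) * Lf (uu k)" by (rule Lf_uu_rec)
  have f: "fact (2 * Suc k + 1) = (2 * real k + 3) * (2 * real k + 2) * (fact (2 * k + 1) :: real)"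
    by (simp add: algebra_simps)
  define A :: real where "A = (-1) ^ k * 4 ^ k * (fact k)\<^sup>2"
  define F :: real where "F = fact (2 * k + 1)"
  have F0: "F > 0" unfolding F_def by simp
  have fk: "(fact (Suc k))\<^sup>2 = (real k + 1)\<^sup>2 * (fact k :: real)\<^sup>2"
    by (simp add: power2_eq_square algebra_simps)
  have "Lf (uu (Suc k)) = - 2 * (real k + 1) * Lf (uu k) / (2 * real k + 3)"
    using r by (simp add: field_simps)
  also have "\<dots> = - 2 * (real k + 1) * (A / F) / (2 * real k + 3)"
    unfolding Suc.IH A_def F_def by simp
  also have "\<dots> = (-1) * 4 * A * (real k + 1)\<^sup>2 / ((2 * real k + 3) * (2 * real k + 2) * F)"
  proof -
    have p1: "2 * real k + 3 > 0" "2 * real k + 2 > 0" by auto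
    have "(real k + 1)\<^sup>2 * 4 = 2 * (real k + 1) * (2 * real k + 2)" by (simp add: power2_eq_square algebra_simps)
    then show ?thesis using F0 p1 by (simp add: divide_simps) (simp add: algebra_simps)
  qed
  also have "\<dots> = (-1) ^ Suc k * 4 ^ Suc k * (fact (Suc k))\<^sup>2 / fact (2 * Suc k + 1)"
    unfolding f fk A_def F_def by (simp add: algebra_simps)
  finally show ?case .
qed

lemma QQ_norm: "Lf (QQ n * QQ n) = 4 ^ n * (fact n)\<^sup>2 / real (2 * n + 1)"
proof -
  have "Lf (QQ n * QQ n) = ((-1) ^ n * (-1) ^ n) * 4 ^ n * (fact n)\<^sup>2 * (fact (2 * n) / fact (2 * n + 1))"
    by (simp add: QQ_norm_aux Lf_uu)
  also have "(-1::real) ^ n * (-1) ^ n = 1" by (simp add: power_mult_distrib[symmetric])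
  also have "fact (2 * n) / fact (2 * n + 1) = (1::real) / real (2 * n + 1)"
  proof -
    have "fact (2 * n + 1) = real (2 * n + 1) * (fact (2 * n) :: real)" by (simp del: of_nat_Suc)
    then show ?thesis by simp
  qed
  finally show ?thesis by simp
qed


lemma uu_expand: "uu n = (\<Sum>i\<le>n. monom (real (n choose i) * (-1) ^ (n - i)) (2 * i))"
proof -
  have e: "[:-1,0,1:] = monom (1::real) 2 + [:-1:]" by (simp add: monom_altdef power2_eq_square)
  have "uu n = (\<Sum>i\<le>n. of_nat (n choose i) * monom 1 2 ^ i * [:-1:] ^ (n - i))"
    unfolding uu_def e by (rule binomial_ring)
  also have "\<dots> = (\<Sum>i\<le>n. monom (real (n choose i) * (-1) ^ (n - i)) (2 * i))"
  proof (intro sum.cong refl)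
    fix i
    have "[:-1::real:] ^ (n - i) = [:(-1) ^ (n - i):]" by (simp add: poly_const_pow)
    then show "of_nat (n choose i) * monom 1 2 ^ i * [:-1:] ^ (n - i) = monom (real (n choose i) * (-1) ^ (n - i)) (2 * i)"
      by (simp add: monom_power of_nat_poly smult_monom mult.commute)
  qed
  finally show ?thesis .
qed

lemma abs_coeff_uu: "\<bar>coeff (uu n) j\<bar> \<le> (\<Sum>i\<le>n. if j = 2 * i then real (n choose i) else 0)"
proof -
  have "coeff (uu n) j = (\<Sum>i\<le>n. if j = 2 * i then real (n choose i) * (-1) ^ (n - i) else 0)"
    unfolding uu_expand by (auto simp: coeff_sum coeff_monom intro!: sum.cong)
  also have "\<bar>\<dots>\<bar> \<le> (\<Sum>i\<le>n. \<bar>if j = 2 * i then real (n choose i) * (-1) ^ (n - i) else 0\<bar>)"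
    by (rule sum_abs)
  also have "\<dots> = (\<Sum>i\<le>n. if j = 2 * i then real (n choose i) else 0)"
    by (intro sum.cong) (auto simp: abs_mult)
  finally show ?thesis .
qed

definition Sn :: "nat \<Rightarrow> real" where
  "Sn n = (\<Sum>i\<le>n. real (n choose i) * real ((2 * i) choose n))"

lemma pochhammer_binom: "n \<le> m \<Longrightarrow> pochhammer (real (Suc (m - n))) n = fact n * real (m choose n)"
proof -
  assume nm: "n \<le> m"
  have "pochhammer (real (Suc (m - n))) n * fact (m - n) = fact m"
    using pochhammer_Suc_fact[of "m - n" n] nm by simp
  moreover have "fact n * fact (m - n) * real (m choose n) = fact m"
    using binomial_fact_lemma[OF nm] by (metis of_nat_fact of_nat_mult)
  ultimately show ?thesis by (metis fact_nonzero mult.commute mult_right_cancel mult.left_commute)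
qed

lemma sum_abs_coeff_QQ: "(\<Sum>k\<le>n. \<bar>coeff (QQ n) k\<bar>) \<le> fact n * Sn n"
proof -
  have "(\<Sum>k\<le>n. \<bar>coeff (QQ n) k\<bar>) = (\<Sum>k\<le>n. pochhammer (real (Suc k)) n * \<bar>coeff (uu n) (k + n)\<bar>)"
    by (intro sum.cong) (auto simp: coeff_QQ abs_mult pochhammer_nonneg)
  also have "\<dots> \<le> (\<Sum>k\<le>n. pochhammer (real (Suc k)) n * (\<Sum>i\<le>n. if k + n = 2 * i then real (n choose i) else 0))"
    by (intro sum_mono mult_left_mono abs_coeff_uu) (simp add: pochhammer_nonneg)
  also have "\<dots> = (\<Sum>i\<le>n. \<Sum>k\<le>n. if k = 2 * i - n \<and> n \<le> 2 * i then pochhammer (real (Suc (2 * i - n))) n * real (n choose i) else 0)"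
    by (subst sum.swap) (auto simp: sum_distrib_left intro!: sum.cong)
  also have "\<dots> = (\<Sum>i\<le>n. if n \<le> 2 * i then pochhammer (real (Suc (2 * i - n))) n * real (n choose i) else 0)"
  proof (intro sum.cong refl)
    fix i assume "i \<in> {..n}"
    then have "2 * i - n \<le> n" by auto
    then show "(\<Sum>k\<le>n. if k = 2 * i - n \<and> n \<le> 2 * i then pochhammer (real (Suc (2 * i - n))) n * real (n choose i) else 0)
      = (if n \<le> 2 * i then pochhammer (real (Suc (2 * i - n))) n * real (n choose i) else 0)"
      by (cases "n \<le> 2 * i") (simp_all add: sum.delta')
  qed
  also have "\<dots> = (\<Sum>i\<le>n. fact n * (real (n choose i) * real ((2 * i) choose n)))"
  proof (intro sum.cong refl)
    fix i
    show "(if n \<le> 2 * i then pochhammer (real (Suc (2 * i - n))) n * real (n choose i) else 0)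
       = fact n * (real (n choose i) * real ((2 * i) choose n))"
    proof (cases "n \<le> 2 * i")
      case True
      then show ?thesis using pochhammer_binom[OF True] by (simp only: if_True) simp
    next
      case False
      then show ?thesis by simp
    qed
  qed
  also have "\<dots> = fact n * Sn n" by (simp add: Sn_def sum_distrib_left)
  finally show ?thesis .
qed

lemma sum_delta_mult: "finite A \<Longrightarrow> (\<Sum>l\<in>A. (f l::real) * (if l = k then 1 else 0)) = (if k \<in> A then f k else 0)"
proof -
  assume "finite A"
  have "(\<Sum>l\<in>A. (f l::real) * (if l = k then 1 else 0)) = (\<Sum>l\<in>A. if l = k then f l else 0)"
    by (intro sum.cong) auto
  then show ?thesis using \<open>finite A\<close> by (simp add: sum.delta)
qed

lemma coeff_11_pow: "coeff ([:1,1:] ^ m) k = real (m choose k)"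
proof -
  have e: "[:1,1::real:] = monom 1 1 + 1" by (simp add: monom_altdef one_pCons)
  have "[:1,1::real:] ^ m = (\<Sum>l\<le>m. of_nat (m choose l) * monom 1 1 ^ l * 1 ^ (m - l))"
    unfolding e by (rule binomial_ring)
  then have "coeff ([:1,1:] ^ m) k = (\<Sum>l\<le>m. real (m choose l) * (if l = k then 1 else 0))"
    by (auto simp: coeff_sum monom_power of_nat_poly coeff_monom intro!: sum.cong)
  also have "\<dots> = real (m choose k)"
    by (subst sum_delta_mult) auto
  finally show ?thesis .
qed

lemma Sn_poly: "Sn n = coeff (([:1,1:] ^ 2 + 1) ^ n) n"
proof -
  have "([:1,1::real:] ^ 2 + 1) ^ n = (\<Sum>i\<le>n. of_nat (n choose i) * ([:1,1:] ^ 2) ^ i * 1 ^ (n - i))"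
    by (rule binomial_ring)
  then have "coeff (([:1,1:] ^ 2 + 1) ^ n) n = (\<Sum>i\<le>n. real (n choose i) * coeff ([:1,1:] ^ (2 * i)) n)"
    by (simp add: coeff_sum of_nat_poly power_mult)
  then show ?thesis by (simp add: coeff_11_pow Sn_def)
qed

definition Ev :: "nat \<Rightarrow> real" where
  "Ev t = (if even t then real (t choose (t div 2)) * 2 ^ (t div 2) else 0)"

lemma coeff_201_pow: "coeff ([:2,0,1:] ^ t) t = Ev t"
proof -
  have e: "[:2,0,1::real:] = monom 1 2 + [:2:]" by (simp add: monom_altdef power2_eq_square)
  have "[:2,0,1::real:] ^ t = (\<Sum>l\<le>t. of_nat (t choose l) * monom 1 2 ^ l * [:2:] ^ (t - l))"
    unfolding e by (rule binomial_ring)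
  then have "coeff ([:2,0,1:] ^ t) t = (\<Sum>l\<le>t. if t = 2 * l then real (t choose l) * 2 ^ (t - l) else 0)"
    by (auto simp: coeff_sum monom_power of_nat_poly coeff_monom poly_const_pow smult_monom mult.commute intro!: sum.cong)
  also have "\<dots> = Ev t"
  proof (cases "even t")
    case True
    then obtain l where l: "t = 2 * l" by auto
    have "(\<Sum>i\<le>t. if t = 2 * i then real (t choose i) * 2 ^ (t - i) else 0)
        = (\<Sum>i\<le>t. if i = l then real (t choose l) * 2 ^ l else 0)"
      using l by (intro sum.cong) auto
    also have "\<dots> = Ev t" using l by (simp add: Ev_def)
    finally show ?thesis .
  next
    case False
    then have "\<And>i. t \<noteq> 2 * i" by auto
    then show ?thesis using False by (simp add: Ev_def)
  qed
  finally show ?thesis .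
qed

lemma Sn_W: "Sn n = (\<Sum>t\<le>n. real (n choose t) * 2 ^ (n - t) * Ev t)"
proof -
  have e: "[:1,1::real:] ^ 2 + 1 = [:2,0,1:] + [:0,2:]" by (simp add: power2_eq_square one_pCons)
  have "([:2,0,1::real:] + [:0,2:]) ^ n = (\<Sum>t\<le>n. of_nat (n choose t) * [:2,0,1:] ^ t * [:0,2:] ^ (n - t))"
    by (rule binomial_ring)
  also have "\<dots> = (\<Sum>t\<le>n. smult (real (n choose t)) ([:2,0,1:] ^ t * monom (2 ^ (n - t)) (n - t)))"
  proof (intro sum.cong refl)
    fix t
    have "[:0,2::real:] = monom 2 1" by (simp add: monom_altdef)
    then have "[:0,2::real:] ^ (n - t) = monom (2 ^ (n - t)) (n - t)" by (simp add: monom_power)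
    then show "of_nat (n choose t) * [:2,0,1:] ^ t * [:0,2:] ^ (n - t) = smult (real (n choose t)) ([:2,0,1:] ^ t * monom (2 ^ (n - t)) (n - t))"
      by (simp add: of_nat_poly)
  qed
  finally have "coeff (([:2,0,1::real:] + [:0,2:]) ^ n) n = (\<Sum>t\<le>n. real (n choose t) * coeff ([:2,0,1:] ^ t * monom (2 ^ (n - t)) (n - t)) n)"
    by (simp add: coeff_sum)
  also have "\<dots> = (\<Sum>t\<le>n. real (n choose t) * 2 ^ (n - t) * Ev t)"
  proof (intro sum.cong refl)
    fix t assume "t \<in> {..n}"
    then have "n = (n - t) + t" by simp
    then have "coeff ([:2,0,1::real:] ^ t * monom (2 ^ (n - t)) (n - t)) n = 2 ^ (n - t) * coeff ([:2,0,1:] ^ t) t"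
      by (simp add: mult.commute[of _ "monom _ _"] coeff_monom_mult)
    then show "real (n choose t) * coeff ([:2,0,1::real:] ^ t * monom (2 ^ (n - t)) (n - t)) n = real (n choose t) * 2 ^ (n - t) * Ev t"
      by (simp add: coeff_201_pow)
  qed
  finally show ?thesis unfolding Sn_poly e .
qed

lemma central_binom_rec: "real (Suc l) * real ((2 * Suc l) choose Suc l) = 2 * (2 * real l + 1) * real ((2 * l) choose l)"
proof -
  have a: "Suc l * (Suc (Suc (2 * l)) choose Suc l) = Suc (Suc (2 * l)) * (Suc (2 * l) choose l)"
    by (rule Suc_times_binomial)
  have b: "Suc l * (Suc (2 * l) choose Suc l) = Suc (2 * l) * ((2 * l) choose l)"
    by (rule Suc_times_binomial)
  have c: "(Suc (2 * l) choose Suc l) = (Suc (2 * l) choose l)"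
    using binomial_symmetric[of l "Suc (2 * l)"] by simp
  define X where "X = real (Suc (Suc (2 * l)) choose Suc l)"
  define Y where "Y = real (Suc (2 * l) choose l)"
  define Z where "Z = real ((2 * l) choose l)"
  have a': "(real l + 1) * X = (2 * real l + 2) * Y"
    using arg_cong[OF a, of real] unfolding X_def Y_def by (simp del: binomial_Suc_Suc add: algebra_simps)
  have b': "(real l + 1) * Y = (2 * real l + 1) * Z"
    using arg_cong[OF b, of real] c unfolding Y_def Z_def by (simp del: binomial_Suc_Suc add: algebra_simps)
  have "(real l + 1) * X = 2 * ((real l + 1) * Y)" using a' by (simp add: algebra_simps)
  also have "\<dots> = 2 * (2 * real l + 1) * Z" using b' by simp
  finally have "(real l + 1) * X = 2 * (2 * real l + 1) * Z" .
  moreover have "Suc (Suc (2 * l)) = 2 * Suc l" by simp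
  ultimately show ?thesis unfolding X_def Z_def by (simp del: binomial_Suc_Suc add: algebra_simps)
qed

lemma central_binom_bound: "(real ((2 * l) choose l) / 4 ^ l)\<^sup>2 * (2 * real l + 1) \<le> 1"
proof (induction l)
  case 0 then show ?case by simp
next
  case (Suc l)
  define c where "c = real ((2 * l) choose l) / 4 ^ l"
  have r: "real ((2 * Suc l) choose Suc l) / 4 ^ Suc l = c * (2 * real l + 1) / (2 * real l + 2)"
  proof -
    define B where "B = real ((2 * Suc l) choose Suc l)"
    define Z where "Z = real ((2 * l) choose l)"
    define q :: real where "q = 4 ^ l"
    have q: "q > 0" unfolding q_def by simp
    have h: "(real l + 1) * B = 2 * (2 * real l + 1) * Z"
    proof -
      have e: "real (Suc l) = real l + 1" by simp
      show ?thesis using central_binom_rec[of l] e unfolding B_def Z_def by (simp only:)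
    qed
    have "B / (4 * q) = ((real l + 1) * B) / ((real l + 1) * (4 * q))" by simp
    also have "\<dots> = 2 * (2 * real l + 1) * Z / ((real l + 1) * (4 * q))" unfolding h ..
    also have "\<dots> = (Z / q) * (2 * real l + 1) / (2 * real l + 2)"
    proof -
      have p: "real l + 1 > 0" "2 * real l + 2 > 0" by auto
      show ?thesis using q p by (simp add: divide_simps) (simp add: algebra_simps)
    qed
    finally have "B / (4 * q) = (Z / q) * (2 * real l + 1) / (2 * real l + 2)" .
    then show ?thesis unfolding B_def Z_def q_def c_def by simp
  qed
  have "(c * (2 * real l + 1) / (2 * real l + 2))\<^sup>2 * (2 * real (Suc l) + 1)
      = c\<^sup>2 * (2 * real l + 1) * ((2 * real l + 1) * (2 * real l + 3) / (2 * real l + 2)\<^sup>2)"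
    by (simp add: power2_eq_square field_simps)
  also have "\<dots> \<le> c\<^sup>2 * (2 * real l + 1) * 1"
  proof (intro mult_left_mono)
    have "(2 * real l + 1) * (2 * real l + 3) \<le> (2 * real l + 2)\<^sup>2" by (simp add: power2_eq_square algebra_simps)
    then show "(2 * real l + 1) * (2 * real l + 3) / (2 * real l + 2)\<^sup>2 \<le> 1" by simp
  qed simp
  also have "\<dots> \<le> 1" using Suc.IH unfolding c_def by simp
  finally show ?case unfolding r .
qed

definition sq2 :: real where "sq2 = 2 * sqrt 2"

lemma sq2_sq: "sq2 ^ 2 = 8" unfolding sq2_def by (simp add: power_mult_distrib)
lemma sq2_pos: "sq2 > 0" unfolding sq2_def by simp

definition ew :: "nat \<Rightarrow> real" where
  "ew t = (if even t then real (t choose (t div 2)) / 2 ^ t else 0)"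

lemma ew_sq: "(ew t)\<^sup>2 \<le> 1 / real (t + 1)"
proof (cases "even t")
  case True
  then obtain l where l: "t = 2 * l" by auto
  have "(real ((2 * l) choose l) / 4 ^ l)\<^sup>2 * (2 * real l + 1) \<le> 1" by (rule central_binom_bound)
  moreover have "(2::real) ^ (2 * l) = 4 ^ l" by (simp add: power_mult)
  ultimately show ?thesis using l by (simp add: ew_def field_simps)
next
  case False then show ?thesis by (simp add: ew_def)
qed

lemma ew_nonneg: "ew t \<ge> 0" by (simp add: ew_def)

lemma Ev_ew: "real (n choose t) * 2 ^ (n - t) * Ev t = (real (n choose t) * 2 ^ (n - t) * sq2 ^ t) * ew t"
proof (cases "even t")
  case True
  then obtain l where l: "t = 2 * l" by auto
  have "sq2 ^ t = 8 ^ l" using l sq2_sq by (simp add: power_mult)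
  moreover have "(2::real) ^ t = 4 ^ l" using l by (simp add: power_mult)
  moreover have "(8::real) ^ l / 4 ^ l = 2 ^ l"
    by (simp add: power_divide[symmetric])
  ultimately have H: "sq2 ^ t * (real (t choose (t div 2)) / 2 ^ t) = real (t choose (t div 2)) * 2 ^ (t div 2)"
    using l by (simp add: field_simps)
  show ?thesis unfolding Ev_def ew_def using True by (simp only: if_True mult.assoc H)
next
  case False then show ?thesis by (simp add: Ev_def ew_def)
qed

lemma sum_sq_le_sq_sum_abs:
  fixes x :: "nat \<Rightarrow> real"
  shows "finite A \<Longrightarrow> (\<Sum>k\<in>A. (x k)\<^sup>2) \<le> (\<Sum>k\<in>A. \<bar>x k\<bar>)\<^sup>2"
proof (induction A rule: finite_induct)
  case empty then show ?case by simp
next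
  case (insert a A)
  have "0 \<le> (\<Sum>k\<in>A. \<bar>x k\<bar>)" by (simp add: sum_nonneg)
  then have "(x a)\<^sup>2 + (\<Sum>k\<in>A. \<bar>x k\<bar>)\<^sup>2 \<le> (\<bar>x a\<bar> + (\<Sum>k\<in>A. \<bar>x k\<bar>))\<^sup>2"
    by (simp add: power2_eq_square algebra_simps)
  then show ?case using insert by simp
qed

lemma Sn_sq_bound: "(Sn n)\<^sup>2 \<le> (sq2 + 2) ^ (2 * n + 1) / (real (n + 1) * sq2)"
proof -
  define a where "a t = real (n choose t) * 2 ^ (n - t) * sq2 ^ t" for t
  have a0: "a t \<ge> 0" for t unfolding a_def using sq2_pos by simp
  have S: "Sn n = (\<Sum>t\<le>n. a t * 1 * ew t)"
    unfolding Sn_W a_def by (simp add: Ev_ew)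
  have "(Sn n)\<^sup>2 \<le> (\<Sum>t\<le>n. a t * 1\<^sup>2) * (\<Sum>t\<le>n. a t * (ew t)\<^sup>2)"
    unfolding S by (rule wcs) (auto simp: a0)
  also have "(\<Sum>t\<le>n. a t * 1\<^sup>2) * (\<Sum>t\<le>n. a t * (ew t)\<^sup>2) = (\<Sum>t\<le>n. a t) * (\<Sum>t\<le>n. a t * (ew t)\<^sup>2)" by simp
  also have "\<dots> \<le> (\<Sum>t\<le>n. a t) * (\<Sum>t\<le>n. a t / real (t + 1))"
  proof (intro mult_left_mono sum_mono)
    fix t show "a t * (ew t)\<^sup>2 \<le> a t / real (t + 1)"
      using mult_left_mono[OF ew_sq[of t] a0[of t]] by simp
  qed (simp add: a0 sum_nonneg)
  also have "(\<Sum>t\<le>n. a t) = (sq2 + 2) ^ n"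
    unfolding a_def binomial_ring by (simp add: algebra_simps)
  also have "(\<Sum>t\<le>n. a t / real (t + 1)) \<le> (sq2 + 2) ^ (n + 1) / (real (n + 1) * sq2)"
  proof -
    define f where "f i = real (Suc n choose i) * sq2 ^ i * 2 ^ (Suc n - i)" for i
    have "(\<Sum>t\<le>n. a t / real (t + 1)) = (\<Sum>t\<le>n. f (Suc t)) / (real (n + 1) * sq2)"
    proof -
      have "a t / real (t + 1) = f (Suc t) / (real (n + 1) * sq2)" for t
      proof -
        have "real (Suc t) * real (Suc n choose Suc t) = real (Suc n) * real (n choose t)"
          using arg_cong[OF Suc_times_binomial[of t n], of real] by (simp only: of_nat_mult)
        then have "real (n choose t) / real (t + 1) = real (Suc n choose Suc t) / real (n + 1)"
          by (simp add: field_simps del: binomial_Suc_Suc)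
        moreover have "a t / real (t + 1) = (real (n choose t) / real (t + 1)) * 2 ^ (n - t) * sq2 ^ t"
          unfolding a_def by simp
        moreover have "f (Suc t) / (real (n + 1) * sq2) = (real (Suc n choose Suc t) / real (n + 1)) * 2 ^ (n - t) * sq2 ^ t"
        proof -
          have "f (Suc t) = sq2 * (real (Suc n choose Suc t) * 2 ^ (n - t) * sq2 ^ t)"
            unfolding f_def by (simp del: binomial_Suc_Suc add: algebra_simps)
          moreover have "real (n + 1) > 0" by simp
          ultimately show ?thesis using sq2_pos by (simp del: binomial_Suc_Suc of_nat_Suc add: divide_simps)
        qed
        ultimately show ?thesis by simp
      qed
      then show ?thesis by (simp add: sum_divide_distrib)
    qed
    also have "(\<Sum>t\<le>n. f (Suc t)) \<le> (\<Sum>i\<le>Suc n. f i)"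
      by (subst sum.atMost_Suc_shift) (simp add: f_def)
    also have "(\<Sum>i\<le>Suc n. f i) = (sq2 + 2) ^ (n + 1)"
      unfolding f_def binomial_ring by simp
    finally show ?thesis using sq2_pos by (simp add: divide_right_mono)
  qed
  also have "(sq2 + 2) ^ n * ((sq2 + 2) ^ (n + 1) / (real (n + 1) * sq2)) = (sq2 + 2) ^ (2 * n + 1) / (real (n + 1) * sq2)"
    by (simp add: power_add[symmetric] mult_2)
  finally show ?thesis using sq2_pos by (simp add: mult_left_mono)
qed


definition gam :: real where "gam = (1 + sqrt 2)\<^sup>2"
definition Bc :: real where "Bc = 2 * (sq2 + 2) / sq2"

lemma gam_gt1: "gam > 1"
proof -
  have "1 + sqrt 2 > 1" by simp
  then have "1 < (1 + sqrt 2) ^ 2" by (rule one_less_power) simp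
  then show ?thesis unfolding gam_def .
qed

lemma sq2_gam: "(sq2 + 2)\<^sup>2 = 4 * gam"
  unfolding sq2_def gam_def by (simp add: power2_eq_square algebra_simps)

lemma Bc_pos: "Bc > 0" unfolding Bc_def using sq2_pos by simp

lemma ratio_bound: "(fact n * Sn n)\<^sup>2 / Lf (QQ n * QQ n) \<le> Bc * gam ^ n"
proof -
  have f0: "(fact n :: real) \<noteq> 0" by simp
  have q: "(4::real) ^ n > 0" by simp
  have "(fact n * Sn n)\<^sup>2 / Lf (QQ n * QQ n) = (Sn n)\<^sup>2 * real (2 * n + 1) / 4 ^ n"
    unfolding QQ_norm using f0 by (simp add: power_mult_distrib field_simps)
  also have "\<dots> \<le> ((sq2 + 2) ^ (2 * n + 1) / (real (n + 1) * sq2)) * real (2 * n + 1) / 4 ^ n"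
    by (intro divide_right_mono mult_right_mono Sn_sq_bound) auto
  also have "(sq2 + 2) ^ (2 * n + 1) = (sq2 + 2) * (4 ^ n * gam ^ n)"
    by (simp add: power_mult sq2_gam power_mult_distrib)
  also have "((sq2 + 2) * (4 ^ n * gam ^ n) / (real (n + 1) * sq2)) * real (2 * n + 1) / 4 ^ n
      = ((sq2 + 2) / sq2) * (real (2 * n + 1) / real (n + 1)) * gam ^ n"
  proof -
    have np: "real (n + 1) > 0" by simp
    show ?thesis using q sq2_pos np by (simp del: of_nat_Suc add: divide_simps)
  qed
  also have "\<dots> \<le> ((sq2 + 2) / sq2) * 2 * gam ^ n"
  proof (intro mult_right_mono mult_left_mono)
    show "real (2 * n + 1) / real (n + 1) \<le> 2" by (simp add: field_simps)
  qed (use sq2_pos gam_gt1 in auto)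
  finally show ?thesis unfolding Bc_def by (simp add: algebra_simps)
qed

lemma sum_abs_coeff_QQ_any:
  assumes "finite A"
  shows "(\<Sum>k\<in>A. \<bar>coeff (QQ n) k\<bar>) \<le> fact n * Sn n"
proof -
  have "(\<Sum>k\<in>A. \<bar>coeff (QQ n) k\<bar>) = (\<Sum>k\<in>A \<inter> {..n}. \<bar>coeff (QQ n) k\<bar>)"
    using assms by (intro sum.mono_neutral_right) (auto dest!: le_degree simp: degree_QQ)
  also have "\<dots> \<le> (\<Sum>k\<le>n. \<bar>coeff (QQ n) k\<bar>)"
    by (intro sum_mono2) auto
  also have "\<dots> \<le> fact n * Sn n" by (rule sum_abs_coeff_QQ)
  finally show ?thesis .
qed

definition Tn :: "nat \<Rightarrow> real" where
  "Tn N = (\<Sum>n<N. (\<Sum>k<N. (coeff (QQ n) k)\<^sup>2) / Lf (QQ n * QQ n))"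

lemma QQ_norm_pos: "Lf (QQ n * QQ n) > 0"
  unfolding QQ_norm by simp

lemma Tn_bound: "Tn N \<le> Bc / (gam - 1) * gam ^ N"
proof -
  have "Tn N \<le> (\<Sum>n<N. Bc * gam ^ n)"
    unfolding Tn_def
  proof (intro sum_mono)
    fix n
    have "(\<Sum>k<N. (coeff (QQ n) k)\<^sup>2) \<le> (\<Sum>k<N. \<bar>coeff (QQ n) k\<bar>)\<^sup>2"
      by (rule sum_sq_le_sq_sum_abs) simp
    also have "\<dots> \<le> (fact n * Sn n)\<^sup>2"
      by (intro power_mono sum_abs_coeff_QQ_any) (auto simp: sum_nonneg)
    finally have "(\<Sum>k<N. (coeff (QQ n) k)\<^sup>2) / Lf (QQ n * QQ n) \<le> (fact n * Sn n)\<^sup>2 / Lf (QQ n * QQ n)"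
      using QQ_norm_pos[of n] by (intro divide_right_mono) auto
    also have "\<dots> \<le> Bc * gam ^ n" by (rule ratio_bound)
    finally show "(\<Sum>k<N. (coeff (QQ n) k)\<^sup>2) / Lf (QQ n * QQ n) \<le> Bc * gam ^ n" .
  qed
  also have "\<dots> = Bc * ((gam ^ N - 1) / (gam - 1))"
    using gam_gt1 by (simp add: sum_distrib_left[symmetric] geometric_sum)
  also have "\<dots> \<le> Bc * (gam ^ N / (gam - 1))"
    using gam_gt1 Bc_pos by (intro mult_left_mono divide_right_mono) auto
  finally show ?thesis by simp
qed

lemma QQ_expand:
  "(\<forall>k\<ge>N. coeff p k = 0) \<Longrightarrow> \<exists>\<beta>. p = (\<Sum>n<N. smult (\<beta> n) (QQ n))"
proof (induction N arbitrary: p)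
  case 0
  then have "p = 0" by (intro poly_eqI) auto
  then show ?case by simp
next
  case (Suc N)
  define b where "b = coeff p N / coeff (QQ N) N"
  have lq: "coeff (QQ N) N \<noteq> 0" unfolding lead_QQ by simp
  define p' where "p' = p - smult b (QQ N)"
  have "\<forall>k\<ge>N. coeff p' k = 0"
  proof (intro allI impI)
    fix k assume k: "N \<le> k"
    show "coeff p' k = 0"
    proof (cases "k = N")
      case True then show ?thesis unfolding p'_def b_def using lq by simp
    next
      case False
      then have "k > N" using k by simp
      then show ?thesis unfolding p'_def using Suc.prems by (simp add: coeff_eq_0 degree_QQ)
    qed
  qed
  then obtain \<beta> where \<beta>: "p' = (\<Sum>n<N. smult (\<beta> n) (QQ n))" using Suc.IH by blast
  define \<beta>' where "\<beta>' = \<beta>(N := b)"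
  have "(\<Sum>n<N. smult (\<beta>' n) (QQ n)) = (\<Sum>n<N. smult (\<beta> n) (QQ n))"
    unfolding \<beta>'_def by (intro sum.cong) auto
  then have "p = (\<Sum>n<Suc N. smult (\<beta>' n) (QQ n))"
    using \<beta> unfolding p'_def by (simp add: \<beta>'_def algebra_simps)
  then show ?case by blast
qed

lemma Lf_gram:
  "Lf ((\<Sum>k<N. monom (c k) k) * (\<Sum>k<N. monom (c k) k)) = (\<Sum>k<N. \<Sum>l<N. c k * c l * gm (k + l))"
  by (simp add: sum_product Lf_sum mult_monom Lf_monom)

lemma cont_ineq: "(\<Sum>k<N. (c k)\<^sup>2) \<le> Tn N * (\<Sum>k<N. \<Sum>l<N. c k * c l * gm (k + l))"
proof -
  define p where "p = (\<Sum>k<N. monom (c k) k)"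
  have cp: "coeff p k = (if k < N then c k else 0)" for k
    unfolding p_def by (simp add: coeff_sum coeff_monom)
  then have "\<forall>k\<ge>N. coeff p k = 0" by simp
  then obtain \<beta> where \<beta>: "p = (\<Sum>n<N. smult (\<beta> n) (QQ n))" using QQ_expand by blast
  define ll where "ll n = Lf (QQ n * QQ n)" for n
  have lpos: "ll n > 0" for n unfolding ll_def by (rule QQ_norm_pos)
  have "Lf (p * p) = (\<Sum>n<N. \<Sum>m<N. \<beta> n * \<beta> m * Lf (QQ n * QQ m))"
    unfolding \<beta> by (simp add: sum_product Lf_sum Lf_smult mult.assoc mult.left_commute)
  also have "\<dots> = (\<Sum>n<N. ll n * (\<beta> n)\<^sup>2)"
  proof (intro sum.cong refl)
    fix n assume n: "n \<in> {..<N}"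
    have "(\<Sum>m<N. \<beta> n * \<beta> m * Lf (QQ n * QQ m)) = (\<Sum>m<N. if m = n then \<beta> n * \<beta> n * ll n else 0)"
      by (intro sum.cong) (auto simp: QQ_orth ll_def)
    also have "\<dots> = ll n * (\<beta> n)\<^sup>2" using n by (simp add: power2_eq_square)
    finally show "(\<Sum>m<N. \<beta> n * \<beta> m * Lf (QQ n * QQ m)) = ll n * (\<beta> n)\<^sup>2" .
  qed
  finally have Lpp: "Lf (p * p) = (\<Sum>n<N. ll n * (\<beta> n)\<^sup>2)" .
  have "(\<Sum>k<N. (c k)\<^sup>2) = (\<Sum>k<N. (\<Sum>n<N. ll n * \<beta> n * (coeff (QQ n) k / ll n))\<^sup>2)"
  proof (intro sum.cong refl)
    fix k assume "k \<in> {..<N}"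
    then have "c k = coeff p k" using cp by simp
    also have "\<dots> = (\<Sum>n<N. \<beta> n * coeff (QQ n) k)" unfolding \<beta> by (simp add: coeff_sum)
    also have "\<dots> = (\<Sum>n<N. ll n * \<beta> n * (coeff (QQ n) k / ll n))"
    proof (intro sum.cong refl)
      fix n show "\<beta> n * coeff (QQ n) k = ll n * \<beta> n * (coeff (QQ n) k / ll n)"
        using lpos[of n] by (simp add: field_simps)
    qed
    finally show "(c k)\<^sup>2 = (\<Sum>n<N. ll n * \<beta> n * (coeff (QQ n) k / ll n))\<^sup>2" by simp
  qed
  also have "\<dots> \<le> (\<Sum>k<N. (\<Sum>n<N. ll n * (\<beta> n)\<^sup>2) * (\<Sum>n<N. ll n * (coeff (QQ n) k / ll n)\<^sup>2))"
    by (intro sum_mono wcs) (auto simp: less_imp_le lpos)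
  also have "\<dots> = Lf (p * p) * (\<Sum>n<N. \<Sum>k<N. ll n * (coeff (QQ n) k / ll n)\<^sup>2)"
    unfolding Lpp by (simp add: sum_distrib_left[symmetric] sum.swap[of _ "{..<N}" "{..<N}"])
  also have "(\<Sum>n<N. \<Sum>k<N. ll n * (coeff (QQ n) k / ll n)\<^sup>2) = Tn N"
    unfolding Tn_def
  proof (intro sum.cong refl)
    fix n
    have "(\<Sum>k<N. ll n * (coeff (QQ n) k / ll n)\<^sup>2) = (\<Sum>k<N. (coeff (QQ n) k)\<^sup>2 / ll n)"
      using lpos[of n] by (intro sum.cong) (auto simp: power2_eq_square field_simps less_imp_neq)
    then show "(\<Sum>k<N. ll n * (coeff (QQ n) k / ll n)\<^sup>2) = (\<Sum>k<N. (coeff (QQ n) k)\<^sup>2) / Lf (QQ n * QQ n)"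
      by (simp add: sum_divide_distrib ll_def)
  qed
  also have "Lf (p * p) = (\<Sum>k<N. \<Sum>l<N. c k * c l * gm (k + l))"
    unfolding p_def by (rule Lf_gram)
  finally show ?thesis by (simp add: mult.commute)
qed

lemma pow_lip:
  fixes u x :: real
  assumes "\<bar>u\<bar> \<le> 1" "\<bar>x\<bar> \<le> 1"
  shows "\<bar>u ^ i - x ^ i\<bar> \<le> real i * \<bar>u - x\<bar>"
proof (induction i)
  case 0 then show ?case by simp
next
  case (Suc i)
  have "u ^ Suc i - x ^ Suc i = u * (u ^ i - x ^ i) + x ^ i * (u - x)" by (simp add: algebra_simps)
  then have "\<bar>u ^ Suc i - x ^ Suc i\<bar> \<le> \<bar>u\<bar> * \<bar>u ^ i - x ^ i\<bar> + \<bar>x\<bar> ^ i * \<bar>u - x\<bar>"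
    by (metis abs_mult abs_triangle_ineq power_abs)
  also have "\<dots> \<le> 1 * (real i * \<bar>u - x\<bar>) + 1 * \<bar>u - x\<bar>"
    using assms Suc.IH by (intro add_mono mult_mono) (auto simp: power_le_one)
  finally show ?case by (simp add: algebra_simps)
qed

lemma prod_lip:
  fixes u v x :: real
  assumes "\<bar>u\<bar> \<le> 1" "\<bar>v\<bar> \<le> 1" "\<bar>x\<bar> \<le> 1"
  shows "\<bar>u ^ i * v ^ k - x ^ (i + k)\<bar> \<le> real i * \<bar>u - x\<bar> + real k * \<bar>v - x\<bar>"
proof -
  have "u ^ i * v ^ k - x ^ (i + k) = (u ^ i - x ^ i) * v ^ k + x ^ i * (v ^ k - x ^ k)"
    by (simp add: power_add algebra_simps)
  then have "\<bar>u ^ i * v ^ k - x ^ (i + k)\<bar> \<le> \<bar>u ^ i - x ^ i\<bar> * \<bar>v\<bar> ^ k + \<bar>x\<bar> ^ i * \<bar>v ^ k - x ^ k\<bar>"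
    by (metis abs_mult abs_triangle_ineq power_abs)
  also have "\<dots> \<le> (real i * \<bar>u - x\<bar>) * 1 + 1 * (real k * \<bar>v - x\<bar>)"
    using assms by (intro add_mono mult_mono pow_lip) (auto simp: power_le_one)
  finally show ?thesis by simp
qed

lemma cell:
  fixes a b x :: real
  assumes "a \<le> x" "x \<le> b" "\<bar>a\<bar> \<le> 1" "\<bar>b\<bar> \<le> 1"
  shows "\<bar>(b ^ Suc j - a ^ Suc j) / real (Suc j) - (b - a) * x ^ j\<bar> \<le> real j * (b - a)\<^sup>2"
proof -
  have x1: "\<bar>x\<bar> \<le> 1" using assms by auto
  have e: "b ^ Suc j - a ^ Suc j = (b - a) * (\<Sum>i<Suc j. a ^ (Suc j - Suc i) * b ^ i)"
    by (rule power_diff_sumr2)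
  have t: "\<bar>a ^ (Suc j - Suc i) * b ^ i - x ^ j\<bar> \<le> real j * (b - a)" if i: "i < Suc j" for i
  proof -
    have "j = (j - i) + i" using i by simp
    then have "\<bar>a ^ (Suc j - Suc i) * b ^ i - x ^ j\<bar> = \<bar>a ^ (j - i) * b ^ i - x ^ ((j - i) + i)\<bar>"
      by simp
    also have "\<dots> \<le> real (j - i) * \<bar>a - x\<bar> + real i * \<bar>b - x\<bar>"
      using assms x1 by (intro prod_lip) auto
    also have "\<dots> \<le> real (j - i) * (b - a) + real i * (b - a)"
      using assms by (intro add_mono mult_left_mono) auto
    also have "\<dots> = real j * (b - a)" using i by (simp add: of_nat_diff algebra_simps)
    finally show ?thesis .
  qed
  have "\<bar>(\<Sum>i<Suc j. a ^ (Suc j - Suc i) * b ^ i) - real (Suc j) * x ^ j\<bar>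
      = \<bar>\<Sum>i<Suc j. (a ^ (Suc j - Suc i) * b ^ i - x ^ j)\<bar>"
    by (simp add: sum_subtractf)
  also have "\<dots> \<le> (\<Sum>i<Suc j. \<bar>a ^ (Suc j - Suc i) * b ^ i - x ^ j\<bar>)" by (rule sum_abs)
  also have "\<dots> \<le> (\<Sum>i<Suc j. real j * (b - a))" by (intro sum_mono t) simp
  also have "\<dots> = real (Suc j) * (real j * (b - a))" by simp
  finally have s: "\<bar>(\<Sum>i<Suc j. a ^ (Suc j - Suc i) * b ^ i) - real (Suc j) * x ^ j\<bar> \<le> real (Suc j) * (real j * (b - a))" .
  have "(b ^ Suc j - a ^ Suc j) / real (Suc j) - (b - a) * x ^ j
      = (b - a) / real (Suc j) * ((\<Sum>i<Suc j. a ^ (Suc j - Suc i) * b ^ i) - real (Suc j) * x ^ j)"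
    unfolding e by (simp add: field_simps del: of_nat_Suc)
  then have "\<bar>(b ^ Suc j - a ^ Suc j) / real (Suc j) - (b - a) * x ^ j\<bar>
      = (b - a) / real (Suc j) * \<bar>(\<Sum>i<Suc j. a ^ (Suc j - Suc i) * b ^ i) - real (Suc j) * x ^ j\<bar>"
    using assms by (simp add: abs_mult)
  also have "\<dots> \<le> (b - a) / real (Suc j) * (real (Suc j) * (real j * (b - a)))"
    using assms s by (intro mult_left_mono) auto
  also have "\<dots> = real j * (b - a)\<^sup>2" by (simp add: power2_eq_square del: of_nat_Suc)
  finally show ?thesis .
qed

definition nd :: "nat \<Rightarrow> real \<Rightarrow> nat \<Rightarrow> real" where
  "nd M \<delta> m = -1 + \<delta> + 2 * real m / real M"

lemma riemann:
  assumes M: "M \<ge> 1" and d: "0 \<le> \<delta>" "\<delta> \<le> 2 / real M"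
  shows "\<bar>(1 / real M) * (\<Sum>m<M. nd M \<delta> m ^ j) - gm j\<bar> \<le> 2 * real j / real M"
proof -
  define a where "a m = -1 + 2 * real m / real M" for m
  define h where "h = 2 / real M"
  have Mpos: "real M > 0" using M by simp
  have aS: "a (Suc m) = a m + h" for m unfolding a_def h_def by (simp add: add_divide_distrib[symmetric] algebra_simps)
  have a1: "\<bar>a m\<bar> \<le> 1" if "m \<le> M" for m
  proof -
    have "real m \<le> real M" using that by simp
    then have "2 * real m / real M \<le> 2" using Mpos by (simp add: field_simps)
    moreover have "0 \<le> 2 * real m / real M" using Mpos by simp
    ultimately show ?thesis unfolding a_def by (simp add: abs_le_iff)
  qed
  have tele: "(\<Sum>m<M. a (Suc m) ^ Suc j - a m ^ Suc j) = 1 - (-1) ^ Suc j"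
    using M by (subst sum_lessThan_telescope) (simp add: a_def)
  have g2: "2 * gm j = (1 - (-1) ^ Suc j) / real (Suc j)"
    by (simp add: gm_def)
  have "\<bar>h * (\<Sum>m<M. nd M \<delta> m ^ j) - 2 * gm j\<bar>
      = \<bar>\<Sum>m<M. (h * nd M \<delta> m ^ j - (a (Suc m) ^ Suc j - a m ^ Suc j) / real (Suc j))\<bar>"
    unfolding g2 tele[symmetric] by (simp add: sum_subtractf sum_distrib_left sum_divide_distrib[symmetric])
  also have "\<dots> \<le> (\<Sum>m<M. \<bar>h * nd M \<delta> m ^ j - (a (Suc m) ^ Suc j - a m ^ Suc j) / real (Suc j)\<bar>)"
    by (rule sum_abs)
  also have "\<dots> \<le> (\<Sum>m<M. real j * h\<^sup>2)"
  proof (intro sum_mono)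
    fix m assume m: "m \<in> {..<M}"
    have x: "nd M \<delta> m = a m + \<delta>" unfolding nd_def a_def by simp
    have "\<bar>(a (Suc m) ^ Suc j - a m ^ Suc j) / real (Suc j) - (a (Suc m) - a m) * nd M \<delta> m ^ j\<bar> \<le> real j * (a (Suc m) - a m)\<^sup>2"
      using d m a1[of m] a1[of "Suc m"] unfolding x aS h_def by (intro cell) auto
    then show "\<bar>h * nd M \<delta> m ^ j - (a (Suc m) ^ Suc j - a m ^ Suc j) / real (Suc j)\<bar> \<le> real j * h\<^sup>2"
      unfolding aS by (simp add: abs_minus_commute)
  qed
  also have "\<dots> = real M * real j * h\<^sup>2" by simp
  also have "\<dots> = 2 * (2 * real j / real M)" unfolding h_def using Mpos by (simp add: power2_eq_square field_simps)
  finally have "\<bar>h * (\<Sum>m<M. nd M \<delta> m ^ j) - 2 * gm j\<bar> \<le> 2 * (2 * real j / real M)" .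
  moreover have "h * (\<Sum>m<M. nd M \<delta> m ^ j) - 2 * gm j = 2 * ((1 / real M) * (\<Sum>m<M. nd M \<delta> m ^ j) - gm j)"
    unfolding h_def by (simp add: algebra_simps)
  ultimately show ?thesis by (simp add: abs_mult)
qed


definition K0 :: real where "K0 = Bc / (gam - 1)"

lemma K0_pos: "K0 > 0" unfolding K0_def using Bc_pos gam_gt1 by simp

lemma Tn_nonneg: "Tn N \<ge> 0"
  unfolding Tn_def using QQ_norm_pos by (intro sum_nonneg divide_nonneg_pos) auto

lemma Gq_lower:
  "(\<Sum>k<N. (c k)\<^sup>2) \<le> K0 * gam ^ N * (\<Sum>k<N. \<Sum>l<N. c k * c l * gm (k + l))"
proof -
  define S where "S = (\<Sum>k<N. (c k)\<^sup>2)"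
  define G where "G = (\<Sum>k<N. \<Sum>l<N. c k * c l * gm (k + l))"
  have SG: "S \<le> Tn N * G" unfolding S_def G_def by (rule cont_ineq)
  have T: "Tn N \<le> K0 * gam ^ N" unfolding K0_def using Tn_bound[of N] by simp
  show ?thesis
  proof (cases "G \<ge> 0")
    case True
    then have "Tn N * G \<le> K0 * gam ^ N * G" using T by (intro mult_right_mono) auto
    then show ?thesis using SG unfolding S_def G_def by simp
  next
    case False
    then have "Tn N * G \<le> 0" using Tn_nonneg[of N] by (simp add: mult_nonneg_nonpos)
    then have "S \<le> 0" using SG by simp
    moreover have "S \<ge> 0" unfolding S_def by (simp add: sum_nonneg)
    ultimately have "S = 0" by simp
    then have "\<forall>k\<in>{..<N}. (c k)\<^sup>2 = 0" unfolding S_def by (subst sum_nonneg_eq_0_iff[symmetric]) auto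
    then have "G = 0" unfolding G_def by simp
    then show ?thesis using False by simp
  qed
qed

definition hq :: "nat \<Rightarrow> real \<Rightarrow> nat \<Rightarrow> (nat \<Rightarrow> real) \<Rightarrow> real" where
  "hq M \<delta> N c = (\<Sum>k<N. \<Sum>l<N. c k * c l * ((1 / real M) * (\<Sum>m<M. nd M \<delta> m ^ k * nd M \<delta> m ^ l)))"

lemma sum_abs_sq_le: "(\<Sum>k<N. \<bar>c k\<bar>)\<^sup>2 \<le> real N * (\<Sum>k<N. (c k :: real)\<^sup>2)"
proof -
  have "(\<Sum>k<N. 1 * 1 * \<bar>c k\<bar>)\<^sup>2 \<le> (\<Sum>k<N. 1 * 1\<^sup>2) * (\<Sum>k<N. 1 * \<bar>c k\<bar>\<^sup>2)"
    by (rule wcs) auto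
  then show ?thesis by simp
qed

lemma hq_lower:
  assumes M: "M \<ge> 1" and d: "0 \<le> \<delta>" "\<delta> \<le> 2 / real M"
    and MN: "real M \<ge> 8 * K0 * real N ^ 2 * gam ^ N"
  shows "hq M \<delta> N c \<ge> (\<Sum>k<N. (c k)\<^sup>2) / (2 * K0 * gam ^ N)"
proof -
  define S where "S = (\<Sum>k<N. (c k)\<^sup>2)"
  define G where "G = (\<Sum>k<N. \<Sum>l<N. c k * c l * gm (k + l))"
  define K where "K = K0 * gam ^ N"
  have Kpos: "K > 0" unfolding K_def using K0_pos gam_gt1 by simp
  have Mpos: "real M > 0" using M by simp
  have S0: "S \<ge> 0" unfolding S_def by (simp add: sum_nonneg)
  have GK: "S \<le> K * G" unfolding S_def G_def K_def by (rule Gq_lower)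
  have E: "\<bar>hq M \<delta> N c - G\<bar> \<le> 4 * real N / real M * (\<Sum>k<N. \<bar>c k\<bar>)\<^sup>2"
  proof -
    have eqD: "hq M \<delta> N c - G = (\<Sum>k<N. \<Sum>l<N. c k * c l * ((1 / real M) * (\<Sum>m<M. nd M \<delta> m ^ (k + l)) - gm (k + l)))"
      unfolding hq_def G_def sum_subtractf[symmetric]
      by (intro sum.cong refl) (simp add: power_add right_diff_distrib)
    have "\<bar>\<Sum>k<N. \<Sum>l<N. c k * c l * ((1 / real M) * (\<Sum>m<M. nd M \<delta> m ^ (k + l)) - gm (k + l))\<bar> \<le> (\<Sum>k<N. \<Sum>l<N. \<bar>c k * c l * ((1 / real M) * (\<Sum>m<M. nd M \<delta> m ^ (k + l)) - gm (k + l))\<bar>)"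
    proof -
      have "\<bar>\<Sum>k<N. \<Sum>l<N. c k * c l * ((1 / real M) * (\<Sum>m<M. nd M \<delta> m ^ (k + l)) - gm (k + l))\<bar>
          \<le> (\<Sum>k<N. \<bar>\<Sum>l<N. c k * c l * ((1 / real M) * (\<Sum>m<M. nd M \<delta> m ^ (k + l)) - gm (k + l))\<bar>)"
        by (rule sum_abs)
      also have "\<dots> \<le> (\<Sum>k<N. \<Sum>l<N. \<bar>c k * c l * ((1 / real M) * (\<Sum>m<M. nd M \<delta> m ^ (k + l)) - gm (k + l))\<bar>)"
        by (intro sum_mono sum_abs)
      finally show ?thesis .
    qed
    also have "\<dots> \<le> (\<Sum>k<N. \<Sum>l<N. \<bar>c k\<bar> * \<bar>c l\<bar> * (4 * real N / real M))"
    proof (intro sum_mono)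
      fix k l assume k: "k \<in> {..<N}" and l: "l \<in> {..<N}"
      have "\<bar>(1 / real M) * (\<Sum>m<M. nd M \<delta> m ^ (k + l)) - gm (k + l)\<bar> \<le> 2 * real (k + l) / real M"
        by (rule riemann[OF M d])
      also have "\<dots> \<le> 4 * real N / real M"
        using k l Mpos by (intro divide_right_mono) auto
      finally show "\<bar>c k * c l * ((1 / real M) * (\<Sum>m<M. nd M \<delta> m ^ (k + l)) - gm (k + l))\<bar> \<le> \<bar>c k\<bar> * \<bar>c l\<bar> * (4 * real N / real M)"
        unfolding abs_mult by (intro mult_left_mono) auto
    qed
    also have "\<dots> = 4 * real N / real M * (\<Sum>k<N. \<bar>c k\<bar>)\<^sup>2"
    proof -
      have sq: "(\<Sum>k<N. \<bar>c k\<bar>)\<^sup>2 = (\<Sum>k<N. \<Sum>l<N. \<bar>c k\<bar> * \<bar>c l\<bar>)"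
        by (simp add: power2_eq_square sum_product)
      show ?thesis unfolding sq sum_distrib_left by (intro sum.cong refl) (simp add: algebra_simps)
    qed
    finally show ?thesis unfolding eqD .
  qed
  also have "4 * real N / real M * (\<Sum>k<N. \<bar>c k\<bar>)\<^sup>2 \<le> 4 * real N / real M * (real N * S)"
    unfolding S_def using Mpos by (intro mult_left_mono sum_abs_sq_le) auto
  finally have E': "\<bar>hq M \<delta> N c - G\<bar> \<le> 4 * real N ^ 2 / real M * S" by (simp add: power2_eq_square)
  show ?thesis
  proof (cases "N = 0")
    case True then show ?thesis by (simp add: hq_def)
  next
    case False
    then have Np: "real N ^ 2 * gam ^ N > 0" using gam_gt1 by simp
    have "4 * real N ^ 2 / real M \<le> 4 * real N ^ 2 / (8 * K0 * real N ^ 2 * gam ^ N)"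
    proof (rule divide_left_mono)
      have p1: "0 < 8 * K0 * (real N ^ 2 * gam ^ N)" using K0_pos Np by simp
      then have p2: "0 < 8 * K0 * real N ^ 2 * gam ^ N" by (simp add: mult.assoc)
      show "0 < real M * (8 * K0 * real N ^ 2 * gam ^ N)" using Mpos p2 by (rule mult_pos_pos)
    qed (use MN in auto)
    also have "\<dots> = 1 / (2 * K)" unfolding K_def using Np False by (simp add: field_simps)
    finally have c: "4 * real N ^ 2 / real M * S \<le> 1 / (2 * K) * S" using S0 by (intro mult_right_mono)
    have "S / K \<le> G" using GK Kpos by (simp add: field_simps)
    then have "hq M \<delta> N c \<ge> S / K - 1 / (2 * K) * S" using E' c by linarith
    also have "S / K - 1 / (2 * K) * S = S / (2 * K)" using Kpos by (simp add: field_simps)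
    finally show ?thesis unfolding S_def K_def by (simp add: mult.assoc)
  qed
qed

lemma qf_expand:
  fixes A :: "real mat"
  assumes A: "A \<in> carrier_mat N N" and v: "v \<in> carrier_vec N"
  shows "v \<bullet> (A *\<^sub>v v) = (\<Sum>k<N. \<Sum>l<N. v $ k * v $ l * A $$ (k, l))"
proof -
  have "v \<bullet> (A *\<^sub>v v) = (\<Sum>k\<in>{0..<N}. v $ k * (A *\<^sub>v v) $ k)"
    using A unfolding scalar_prod_def by simp
  also have "\<dots> = (\<Sum>k<N. v $ k * (\<Sum>l<N. A $$ (k, l) * v $ l))"
    using A v by (intro sum.cong) (auto simp: scalar_prod_def row_def lessThan_atLeast0)
  also have "\<dots> = (\<Sum>k<N. \<Sum>l<N. v $ k * v $ l * A $$ (k, l))"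
    unfolding sum_distrib_left by (intro sum.cong refl) (simp add: mult_ac)
  finally show ?thesis .
qed

lemma sum_sq_zero_vec:
  assumes v: "v \<in> carrier_vec N" and s: "(\<Sum>k<N. (v $ k)\<^sup>2) = (0::real)"
  shows "v = 0\<^sub>v N"
proof -
  have "\<forall>k\<in>{..<N}. (v $ k)\<^sup>2 = 0" using s by (subst sum_nonneg_eq_0_iff[symmetric]) auto
  then show ?thesis using v by (intro eq_vecI) auto
qed

lemma cs_vec: "(\<Sum>k<N. (y k :: real) * w k)\<^sup>2 \<le> (\<Sum>k<N. (y k)\<^sup>2) * (\<Sum>k<N. (w k)\<^sup>2)"
proof -
  have "0 \<le> (\<Sum>s<N. \<Sum>t<N. (y s * w t - y t * w s)\<^sup>2)" by (intro sum_nonneg) auto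
  also have "\<dots> = (\<Sum>s<N. \<Sum>t<N. (y s)\<^sup>2 * (w t)\<^sup>2 + (y t)\<^sup>2 * (w s)\<^sup>2 - 2 * ((y s * w s) * (y t * w t)))"
    by (intro sum.cong refl) (simp add: power2_eq_square algebra_simps)
  also have "\<dots> = (\<Sum>s<N. \<Sum>t<N. (y s)\<^sup>2 * (w t)\<^sup>2) + (\<Sum>s<N. \<Sum>t<N. (w s)\<^sup>2 * (y t)\<^sup>2)
       - 2 * (\<Sum>s<N. \<Sum>t<N. (y s * w s) * (y t * w t))"
    by (simp add: sum_subtractf sum.distrib sum_distrib_left mult.commute)
  also have "\<dots> = 2 * ((\<Sum>k<N. (y k)\<^sup>2) * (\<Sum>k<N. (w k)\<^sup>2)) - 2 * (\<Sum>k<N. y k * w k)\<^sup>2"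
    by (simp add: sum_product[symmetric] power2_eq_square)
  finally show ?thesis by simp
qed

lemma matrix_part:
  fixes A :: "real mat"
  assumes A: "A \<in> carrier_mat N N" and lam: "lam > 0"
    and Q: "\<And>c. (\<Sum>k<N. \<Sum>l<N. c k * c l * A $$ (k, l)) \<ge> lam * (\<Sum>k<N. (c k)\<^sup>2)"
  shows "invertible_mat A \<and> ell2_opnorm (lift_op (inv_mat A)) \<le> 1 / lam"
proof -
  have Qv: "v \<bullet> (A *\<^sub>v v) \<ge> lam * (\<Sum>k<N. (v $ k)\<^sup>2)" if v: "v \<in> carrier_vec N" for v
    using Q[of "\<lambda>k. v $ k"] qf_expand[OF A v] by simp
  have det: "det A \<noteq> 0"
  proof
    assume "det A = 0"
    then obtain v where v: "v \<in> carrier_vec N" "v \<noteq> 0\<^sub>v N" "A *\<^sub>v v = 0\<^sub>v N"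
      using det_0_iff_vec_prod_zero_field[OF A] by auto
    have "v \<bullet> (A *\<^sub>v v) = 0" using v by simp
    then have "lam * (\<Sum>k<N. (v $ k)\<^sup>2) \<le> 0" using Qv[OF v(1)] by simp
    moreover have "(\<Sum>k<N. (v $ k)\<^sup>2) \<ge> 0" by (simp add: sum_nonneg)
    ultimately have "(\<Sum>k<N. (v $ k)\<^sup>2) = 0" using lam
      by (metis less_eq_real_def mult_le_0_iff not_le)
    then show False using sum_sq_zero_vec[OF v(1)] v(2) by simp
  qed
  have "A \<in> Units (ring_mat TYPE(real) N ())" by (rule det_non_zero_imp_unit[OF A det])
  then obtain B where B: "B \<in> carrier_mat N N" and AB: "A * B = 1\<^sub>m N" and BA: "B * A = 1\<^sub>m N"
    unfolding Units_def ring_mat_def by auto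
  have inv: "invertible_mat A"
    unfolding invertible_mat_def inverts_mat_def using A B AB BA by auto
  have invB: "inv_mat A = B"
    unfolding inv_mat_def
  proof (rule the_equality)
    show "B \<in> carrier_mat (dim_row A) (dim_row A) \<and> inverts_mat A B \<and> inverts_mat B A"
      using A B AB BA unfolding inverts_mat_def by auto
  next
    fix B' assume "B' \<in> carrier_mat (dim_row A) (dim_row A) \<and> inverts_mat A B' \<and> inverts_mat B' A"
    then have B': "B' \<in> carrier_mat N N" "A * B' = 1\<^sub>m N" "B' * A = 1\<^sub>m N"
      using A unfolding inverts_mat_def by auto
    have "B' = B' * (A * B)" using B' AB by simp
    also have "\<dots> = (B' * A) * B" by (rule sym[OF assoc_mult_mat[OF B'(1) A B]])
    also have "\<dots> = B" using B' B by simp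
    finally show "B' = B" .
  qed
  have bound: "(\<Sum>k<N. ((B *\<^sub>v w) $ k)\<^sup>2) \<le> (\<Sum>k<N. (w $ k)\<^sup>2) / lam\<^sup>2" if w: "w \<in> carrier_vec N" for w
  proof -
    define y where "y = B *\<^sub>v w"
    have y: "y \<in> carrier_vec N" unfolding y_def using B w by simp
    have Ay: "A *\<^sub>v y = w" unfolding y_def using A B w AB by (simp flip: assoc_mult_mat_vec)
    define Y where "Y = (\<Sum>k<N. (y $ k)\<^sup>2)"
    define W where "W = (\<Sum>k<N. (w $ k)\<^sup>2)"
    have Y0: "Y \<ge> 0" "W \<ge> 0" unfolding Y_def W_def by (simp_all add: sum_nonneg)
    have "lam * Y \<le> y \<bullet> w" using Qv[OF y] Ay unfolding Y_def by simp
    also have "y \<bullet> w = (\<Sum>k<N. y $ k * w $ k)" using w unfolding scalar_prod_def by (simp add: lessThan_atLeast0)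
    finally have lw: "lam * Y \<le> (\<Sum>k<N. y $ k * w $ k)" .
    have "(lam * Y)\<^sup>2 \<le> (\<Sum>k<N. y $ k * w $ k)\<^sup>2"
      using lw lam Y0 by (intro power_mono) auto
    also have "\<dots> \<le> Y * W" unfolding Y_def W_def by (rule cs_vec)
    finally have "lam\<^sup>2 * Y * Y \<le> W * Y" by (simp add: power2_eq_square algebra_simps)
    then have "lam\<^sup>2 * Y \<le> W"
      using Y0 by (cases "Y = 0") (auto simp: mult_le_cancel_right)
    then show ?thesis using lam unfolding Y_def W_def y_def by (simp add: field_simps)
  qed
  have "ell2_opnorm (lift_op B) \<le> 1 / lam"
    unfolding ell2_opnorm_def
  proof (rule cSup_least)
    show "{ell2_norm (lift_op B v) |v. summable (\<lambda>i. (v i)\<^sup>2) \<and> ell2_norm v \<le> 1} \<noteq> {}"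
    proof -
      have "summable (\<lambda>i. ((\<lambda>_. 0::real) i)\<^sup>2)" by simp
      moreover have "ell2_norm (\<lambda>_. 0) \<le> 1" unfolding ell2_norm_def by simp
      ultimately have "ell2_norm (lift_op B (\<lambda>_. 0)) \<in> {ell2_norm (lift_op B v) |v. summable (\<lambda>i. (v i)\<^sup>2) \<and> ell2_norm v \<le> 1}"
        by (intro CollectI exI[where x="\<lambda>_. 0"]) simp
      then show ?thesis by (metis empty_iff)
    qed
  next
    fix x assume "x \<in> {ell2_norm (lift_op B v) |v. summable (\<lambda>i. (v i)\<^sup>2) \<and> ell2_norm v \<le> 1}"
    then obtain v where x: "x = ell2_norm (lift_op B v)" and sv: "summable (\<lambda>i. (v i)\<^sup>2)"
      and nv: "ell2_norm v \<le> 1" by auto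
    define w where "w = vec N v"
    have w: "w \<in> carrier_vec N" unfolding w_def by simp
    have lift: "lift_op B v i = (if i < N then (B *\<^sub>v w) $ i else 0)" for i
      using B unfolding lift_op_def w_def
      by (auto simp: scalar_prod_def row_def lessThan_atLeast0 intro!: sum.cong)
    have "(\<Sum>i. (lift_op B v i)\<^sup>2) = (\<Sum>i<N. (lift_op B v i)\<^sup>2)"
      by (rule suminf_finite) (auto simp: lift)
    also have "\<dots> = (\<Sum>i<N. ((B *\<^sub>v w) $ i)\<^sup>2)" by (simp add: lift)
    also have "\<dots> \<le> (\<Sum>k<N. (w $ k)\<^sup>2) / lam\<^sup>2" by (rule bound[OF w])
    also have "(\<Sum>k<N. (w $ k)\<^sup>2) = (\<Sum>k<N. (v k)\<^sup>2)" unfolding w_def by simp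
    also have "\<dots> \<le> (\<Sum>i. (v i)\<^sup>2)" using sv by (intro sum_le_suminf) auto
    also have "(\<Sum>i. (v i)\<^sup>2) \<le> 1"
    proof -
      have "sqrt (\<Sum>i. (v i)\<^sup>2) \<le> 1" using nv unfolding ell2_norm_def .
      then show ?thesis by simp
    qed
    finally have "(\<Sum>i. (lift_op B v i)\<^sup>2) \<le> 1 / lam\<^sup>2" using lam by (simp add: divide_right_mono)
    then have "x \<le> sqrt (1 / lam\<^sup>2)" unfolding x ell2_norm_def by simp
    also have "\<dots> = 1 / lam" using lam by (simp add: real_sqrt_divide)
    finally show "x \<le> 1 / lam" .
  qed
  then show ?thesis using inv invB by simp
qed

lemma node_nd: "node M \<delta> m = nd M \<delta> m"
  unfolding node_def nd_def by simp

theorem lemma12: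
  fixes \<gamma> :: real
  defines "\<gamma> \<equiv> (1 + sqrt 2)\<^sup>2"
  shows "\<exists>C1 C2 :: real. C1 > 0 \<and> C2 > 0 \<and>
    (\<forall>(N::nat) (M::nat) (\<delta>::real).
       M \<ge> 1 \<longrightarrow> real M \<ge> C1 * real N ^ 2 * \<gamma> ^ N \<longrightarrow> 0 \<le> \<delta> \<longrightarrow> \<delta> \<le> 2 / real M \<longrightarrow>
       invertible_mat (hatH M \<delta> N) \<and>
       ell2_opnorm (lift_op (inv_mat (hatH M \<delta> N))) \<le> C2 * \<gamma> ^ N)"
proof -
  have g: "\<gamma> = gam" unfolding \<gamma>_def gam_def ..
  have main: "invertible_mat (hatH M \<delta> N) \<and> ell2_opnorm (lift_op (inv_mat (hatH M \<delta> N))) \<le> (2 * K0) * gam ^ N"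
    if M: "M \<ge> 1" and MN: "real M \<ge> (8 * K0) * real N ^ 2 * gam ^ N" and d: "0 \<le> \<delta>" "\<delta> \<le> 2 / real M"
    for N M \<delta>
  proof -
    define lam where "lam = 1 / (2 * K0 * gam ^ N)"
    have lam: "lam > 0" unfolding lam_def using K0_pos gam_gt1 by simp
    have A: "hatH M \<delta> N \<in> carrier_mat N N" unfolding hatH_def by simp
    have Q: "(\<Sum>k<N. \<Sum>l<N. c k * c l * hatH M \<delta> N $$ (k, l)) \<ge> lam * (\<Sum>k<N. (c k)\<^sup>2)" for c
    proof -
      have "(\<Sum>k<N. \<Sum>l<N. c k * c l * hatH M \<delta> N $$ (k, l)) = hq M \<delta> N c"
        unfolding hq_def hatH_def by (intro sum.cong refl) (simp add: node_nd)
      moreover have "hq M \<delta> N c \<ge> (\<Sum>k<N. (c k)\<^sup>2) / (2 * K0 * gam ^ N)"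
        using MN by (intro hq_lower[OF M d]) simp
      ultimately show ?thesis unfolding lam_def by simp
    qed
    have "invertible_mat (hatH M \<delta> N) \<and> ell2_opnorm (lift_op (inv_mat (hatH M \<delta> N))) \<le> 1 / lam"
      by (rule matrix_part[OF A lam Q])
    moreover have "1 / lam = (2 * K0) * gam ^ N" unfolding lam_def by simp
    ultimately show ?thesis by simp
  qed
  show ?thesis unfolding g
    by (rule exI[where x="8 * K0"], rule exI[where x="2 * K0"]) (use K0_pos main in auto)
qed

end
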